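(* Let $\Omega$ be a bounded measurable set in $\mathbb{R}^d$, and suppose there is a positive, locally finite Borel measure $\mu$ with $\mathbf{1}_\Omega\ast\mu=\mathbf{1}_{\Omega^c}$ a.e., where $\Omega^c=\mathbb{R}^d\setminus\Omega$. Then $\operatorname{supp}(\mu)\subset\mathbb{R}^d\setminus\Delta(\Omega)$, where $\Delta(\Omega)=\{x\in\mathbb{R}^d: m(\Omega\cap(\Omega+x))>0\}$.
   Context: $m$ is Lebesgue measure, $\operatorname{supp}(\mu)$ the closed support of $\mu$. *)

theory Defs
  imports "HOL-Analysis.Analysis"
begin

definition locally_finite_measure :: "'a::topological_space measure \<Rightarrow> bool" where
  "locally_finite_measure \<mu> \<longleftrightarrow>
     (\<forall>x. \<exists>U. open U \<and> x \<in> U \<and> emeasure \<mu> U < \<infinity>)"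

definition measure_support :: "'a::topological_space measure \<Rightarrow> 'a set" where
  "measure_support \<mu> = {x. \<forall>U. open U \<longrightarrow> x \<in> U \<longrightarrow> emeasure \<mu> U > 0}"

definition indicator_conv :: "'a::euclidean_space set \<Rightarrow> 'a measure \<Rightarrow> 'a \<Rightarrow> ennreal" where
  "indicator_conv \<Omega> \<mu> x = (\<integral>\<^sup>+ y. indicator \<Omega> (x - y) \<partial>\<mu>)"

definition Delta_set :: "'a::euclidean_space set \<Rightarrow> 'a set" where
  "Delta_set \<Omega> = {x. emeasure lebesgue (\<Omega> \<inter> ((\<lambda>y. y + x) ` \<Omega>)) > 0}"

end

theory Submission imports Defs begin

lemma steinhaus_measure:
  fixes A :: "'a::euclidean_space set"
  assumes A: "A \<in> sets lebesgue" "bounded A" and pos: "emeasure lebesgue A > 0"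
  shows "\<exists>d>0. \<forall>r. norm r < d \<longrightarrow> measure lebesgue (A \<inter> (+) r ` A) > 0"
proof -
  have Al: "A \<in> lmeasurable" using A bounded_set_imp_lmeasurable by blast
  define a where "a = measure lebesgue A"
  have apos: "a > 0" using pos Al unfolding a_def
    by (simp add: emeasure_eq_measure2 measure_nonneg zero_less_measure_iff)
  obtain T where T: "closed T" "T \<subseteq> A" "A - T \<in> lmeasurable" "emeasure lebesgue (A - T) < ennreal (a/2)"
    using sets_lebesgue_inner_closed[OF A(1), of "a/2"] apos by auto
  have Tl: "T \<in> lmeasurable"
  proof -
    have "T \<in> sets borel" using T(1) by (rule borel_closed)
    hence "T \<in> sets lebesgue" by (simp add: sets_completionI_sets)
    thus ?thesis using bounded_set_imp_lmeasurable bounded_subset[OF A(2) T(2)] by blast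
  qed
  have cT: "compact T" using T(1,2) A(2) bounded_subset compact_eq_bounded_closed by blast
  have mAT: "measure lebesgue (A - T) < a/2"
    using T(3,4) by (simp add: emeasure_eq_measure2 ennreal_less_iff divide_simps)
  have "measure lebesgue A = measure lebesgue T + measure lebesgue (A - T)"
    using T Tl Al by (subst measure_Diff) (auto simp: fmeasurable_def)
  hence mT: "measure lebesgue T > a/2" using mAT a_def by linarith
  obtain V where V: "open V" "T \<subseteq> V" "V - T \<in> lmeasurable" "emeasure lebesgue (V - T) < ennreal (a/2)"
    using sets_lebesgue_outer_open[of T "a/2"] Tl apos by auto
  have mVT: "measure lebesgue (V - T) < a/2"
    using V(3,4) by (simp add: emeasure_eq_measure2 ennreal_less_iff divide_simps)
  obtain d where d: "d > 0" "\<forall>x\<in>T. \<forall>y\<in>-V. d \<le> dist x y"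
    using separate_compact_closed[OF cT, of "-V"] V(1,2) by auto
  show ?thesis
  proof (intro exI conjI allI impI)
    show "d > 0" by fact
    fix r :: 'a assume r: "norm r < d"
    have sub: "(+) r ` T \<subseteq> V"
    proof
      fix z assume "z \<in> (+) r ` T"
      then obtain x where x: "x \<in> T" "z = r + x" by auto
      have "dist x z < d" using x r by (simp add: dist_norm)
      then show "z \<in> V" using d(2) x(1) by force
    qed
    have rTl: "(+) r ` T \<in> lmeasurable" using Tl measurable_translation by blast
    have Il: "T \<inter> (+) r ` T \<in> lmeasurable" using Tl rTl by blast
    have "(+) r ` T \<subseteq> (T \<inter> (+) r ` T) \<union> (V - T)" using sub by blast
    hence "measure lebesgue ((+) r ` T) \<le> measure lebesgue ((T \<inter> (+) r ` T) \<union> (V - T))"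
    proof (rule measure_mono_fmeasurable)
      show "(+) r ` T \<in> sets lebesgue" using rTl by (simp add: fmeasurable_def)
      show "T \<inter> (+) r ` T \<union> (V - T) \<in> lmeasurable" using Il V(3) by (rule fmeasurable.Un)
    qed
    also have "\<dots> \<le> measure lebesgue (T \<inter> (+) r ` T) + measure lebesgue (V - T)"
      using Il V(3) by (intro measure_Un_le) auto
    finally have "measure lebesgue (T \<inter> (+) r ` T) > 0"
      using measure_translation[of r T] mT mVT by linarith
    also have "measure lebesgue (T \<inter> (+) r ` T) \<le> measure lebesgue (A \<inter> (+) r ` A)"
      using Il T(2) Al measurable_translation[OF Al, of r]
      by (intro measure_mono_fmeasurable) auto
    finally show "measure lebesgue (A \<inter> (+) r ` A) > 0" .
  qed
qed


lemma ind_diff_meas: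
  fixes S :: "'a::euclidean_space set"
  assumes "S \<in> sets borel"
  shows "(\<lambda>y. indicator S (x - y) :: ennreal) \<in> borel_measurable borel"
proof -
  have "(\<lambda>y. x - y) \<in> borel_measurable borel"
    by (intro borel_measurable_continuous_onI continuous_intros)
  then show ?thesis using measurable_compose[OF _ borel_measurable_indicator[OF assms]] by blast
qed

theorem corollary2p6:
  fixes \<Omega> :: "'a::euclidean_space set" and \<mu> :: "'a measure"
  assumes "\<Omega> \<in> sets lebesgue" and "bounded \<Omega>"
    and "sets \<mu> = sets borel"
    and "locally_finite_measure \<mu>"
    and "AE x in lebesgue. indicator_conv \<Omega> \<mu> x = indicator (UNIV - \<Omega>) x"
  shows "measure_support \<mu> \<subseteq> UNIV - Delta_set \<Omega>"
proof
  fix t assume tsupp: "t \<in> measure_support \<mu>"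
  show "t \<in> UNIV - Delta_set \<Omega>"
  proof (rule ccontr)
    assume "t \<notin> UNIV - Delta_set \<Omega>"
    hence tD: "emeasure lebesgue (\<Omega> \<inter> ((\<lambda>y. y + t) ` \<Omega>)) > 0"
      unfolding Delta_set_def by blast
    obtain S N N' where SN: "\<Omega> = S \<union> N" "N \<subseteq> N'" "N' \<in> null_sets lborel" "S \<in> sets lborel"
      using assms(1) by (rule sets_completionE)
    have Sb[measurable]: "S \<in> sets borel" using SN(4) by simp
    have Sbd: "bounded S" using assms(2) SN(1) bounded_subset by blast
    have SO: "S \<subseteq> \<Omega>" using SN(1) by blast
    define A where "A = S \<inter> {x. x - t \<in> S}"
    have Ab: "A \<in> sets borel" unfolding A_def by measurable
    have AL: "A \<in> sets lebesgue" using Ab by (simp add: sets_completionI_sets)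
    have N1: "N' \<in> null_sets lebesgue" using SN(3) by (rule null_sets_completionI)
    have N2: "{x. x - t \<in> N'} \<in> null_sets lebesgue"
      using null_sets_translation[OF SN(3)] by (rule null_sets_completionI)
    have "\<Omega> \<inter> ((\<lambda>y. y + t) ` \<Omega>) \<subseteq> A \<union> (N' \<union> {x. x - t \<in> N'})"
      using SN(1,2) unfolding A_def by auto
    hence "emeasure lebesgue (\<Omega> \<inter> ((\<lambda>y. y + t) ` \<Omega>)) \<le> emeasure lebesgue (A \<union> (N' \<union> {x. x - t \<in> N'}))"
      using AL N1 N2 by (intro emeasure_mono) (auto intro!: sets.Un dest: null_setsD2)
    also have "\<dots> = emeasure lebesgue A"
      using AL N1 N2 by (intro emeasure_Un_null_set) auto
    finally have Apos: "emeasure lebesgue A > 0" using tD by simp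
    obtain d where d: "d > 0" "\<And>r. norm r < d \<Longrightarrow> measure lebesgue (A \<inter> (+) r ` A) > 0"
      using steinhaus_measure[OF AL _ Apos] Sbd unfolding A_def by (meson bounded_Int)
    have hpos: "emeasure lborel (S \<inter> {x. x - s \<in> S}) > 0" if "dist s t < d" for s
    proof -
      define r where "r = s - t"
      have "norm r < d" using that by (simp add: r_def dist_norm)
      hence m: "measure lebesgue (A \<inter> (+) r ` A) > 0" by (rule d(2))
      have sub: "A \<inter> (+) r ` A \<subseteq> S \<inter> {x. x - s \<in> S}"
        unfolding A_def r_def by auto
      have Bb: "S \<inter> {x. x - s \<in> S} \<in> sets borel" by measurable
      have "emeasure lebesgue (A \<inter> (+) r ` A) > 0"
      proof (rule ccontr)
        assume "\<not> emeasure lebesgue (A \<inter> (+) r ` A) > 0"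
        hence "measure lebesgue (A \<inter> (+) r ` A) = 0" by (simp add: measure_def)
        with m show False by simp
      qed
      also have "emeasure lebesgue (A \<inter> (+) r ` A) \<le> emeasure lebesgue (S \<inter> {x. x - s \<in> S})"
        using sub Bb by (intro emeasure_mono) (auto simp: sets_completionI_sets)
      also have "\<dots> = emeasure lborel (S \<inter> {x. x - s \<in> S})"
        using Bb by (simp add: emeasure_completion)
      finally show ?thesis .
    qed
    obtain U where U: "open U" "t \<in> U" "emeasure \<mu> U < \<infinity>"
      using assms(4) unfolding locally_finite_measure_def by blast
    define W where "W = U \<inter> ball t d"
    have Wo: "open W" and tW: "t \<in> W" using U d(1) by (auto simp: W_def)
    have Wpos: "emeasure \<mu> W > 0" using tsupp Wo tW unfolding measure_support_def by blast
    have Us: "U \<in> sets \<mu>" using U(1) assms(3) by simp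
    have Ws[measurable]: "W \<in> sets borel" using Wo by simp
    have "emeasure \<mu> W \<le> emeasure \<mu> U" using Us by (intro emeasure_mono) (auto simp: W_def)
    hence Wfin: "emeasure \<mu> W < \<infinity>" using U(3) by (rule le_less_trans)
    have spmu: "space \<mu> = UNIV" using sets_eq_imp_space_eq[OF assms(3)] by simp
    have mcong: "borel_measurable \<mu> = borel_measurable borel"
      using assms(3) by (rule measurable_cong_sets) simp
    have AE0: "AE x in lborel. x \<in> S \<longrightarrow> (\<integral>\<^sup>+ y. indicator S (x - y) \<partial>\<mu>) = 0"
    proof -
      have "AE x in lborel. indicator_conv \<Omega> \<mu> x = indicator (UNIV - \<Omega>) x"
        using assms(5) by (simp add: AE_completion_iff)
      then show ?thesis
      proof (rule AE_mp, intro AE_I2 impI)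
        fix x assume h: "indicator_conv \<Omega> \<mu> x = indicator (UNIV - \<Omega>) x" and xS: "x \<in> S"
        have "(\<integral>\<^sup>+ y. indicator \<Omega> (x - y) \<partial>\<mu>) = 0"
          using h xS SO unfolding indicator_conv_def by (auto simp: indicator_def)
        moreover have "(\<integral>\<^sup>+ y. indicator S (x - y) \<partial>\<mu>) \<le> (\<integral>\<^sup>+ y. indicator \<Omega> (x - y) \<partial>\<mu>)"
          using SO by (intro nn_integral_mono) (auto simp: indicator_def)
        ultimately show "(\<integral>\<^sup>+ y. indicator S (x - y) \<partial>\<mu>) = 0" by simp
      qed
    qed
    define \<nu> where "\<nu> = density \<mu> (indicator W)"
    have iWm: "indicator W \<in> borel_measurable \<mu>" unfolding mcong by measurable
    have sets_nu: "sets \<nu> = sets borel" by (simp add: \<nu>_def assms(3))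
    have "emeasure \<nu> (space \<nu>) = emeasure \<mu> W"
      unfolding \<nu>_def using iWm spmu Ws assms(3)
      by (simp add: emeasure_density nn_integral_indicator)
    hence "finite_measure \<nu>" using Wfin by (intro finite_measureI) simp
    then interpret nu: finite_measure \<nu> .
    interpret P: pair_sigma_finite lborel \<nu>
      by (intro pair_sigma_finite.intro sigma_finite_lborel nu.sigma_finite_measure_axioms)
    define f where "f = (\<lambda>(x::'a,y::'a). indicator S x * indicator S (x - y) :: ennreal)"
    have fm: "f \<in> borel_measurable (lborel \<Otimes>\<^sub>M \<nu>)"
    proof -
      have "f \<in> borel_measurable (lborel \<Otimes>\<^sub>M lborel)" unfolding f_def by measurable
      moreover have seq: "sets (lborel \<Otimes>\<^sub>M \<nu>) = sets (lborel \<Otimes>\<^sub>M lborel)"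
        by (rule sets_pair_measure_cong) (auto simp: sets_nu)
      ultimately show ?thesis by (simp only: measurable_cong_sets[OF seq refl])
    qed
    have eq: "(\<integral>\<^sup>+ y. (\<integral>\<^sup>+ x. f (x, y) \<partial>lborel) \<partial>\<nu>) = (\<integral>\<^sup>+ x. (\<integral>\<^sup>+ y. f (x, y) \<partial>\<nu>) \<partial>lborel)"
      by (rule P.Fubini[OF fm])
    have "(\<integral>\<^sup>+ x. (\<integral>\<^sup>+ y. f (x, y) \<partial>\<nu>) \<partial>lborel) = (\<integral>\<^sup>+ (x::'a). 0 \<partial>lborel)"
    proof (rule nn_integral_cong_AE)
      show "AE x in lborel. (\<integral>\<^sup>+ y. f (x, y) \<partial>\<nu>) = 0"
        using AE0
      proof (rule AE_mp, intro AE_I2 impI)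
        fix x assume hx: "x \<in> S \<longrightarrow> (\<integral>\<^sup>+ y. indicator S (x - y) \<partial>\<mu>) = 0"
        have m1: "(\<lambda>y. f (x, y)) \<in> borel_measurable \<mu>" unfolding mcong f_def using ind_diff_meas[OF Sb, of x] by simp
        have "(\<integral>\<^sup>+ y. f (x, y) \<partial>\<nu>) = (\<integral>\<^sup>+ y. indicator W y * f (x, y) \<partial>\<mu>)"
          unfolding \<nu>_def by (rule nn_integral_density[OF iWm m1])
        also have "\<dots> \<le> (\<integral>\<^sup>+ y. indicator S x * indicator S (x - y) \<partial>\<mu>)"
          by (intro nn_integral_mono) (auto simp: f_def indicator_def)
        also have "\<dots> = indicator S x * (\<integral>\<^sup>+ y. indicator S (x - y) \<partial>\<mu>)"
          by (rule nn_integral_cmult) (unfold mcong, rule ind_diff_meas[OF Sb])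
        also have "\<dots> = 0" using hx by (cases "x \<in> S") auto
        finally show "(\<integral>\<^sup>+ y. f (x, y) \<partial>\<nu>) = 0" by simp
      qed
    qed
    hence int0: "(\<integral>\<^sup>+ y. (\<integral>\<^sup>+ x. f (x, y) \<partial>lborel) \<partial>\<nu>) = 0" using eq by simp
    define h where "h = (\<lambda>y. \<integral>\<^sup>+ x. indicator S x * indicator S (x - y) \<partial>lborel :: ennreal)"
    have hm: "h \<in> borel_measurable borel" unfolding h_def by measurable
    have hmu: "h \<in> borel_measurable \<mu>" unfolding mcong by (rule hm)
    have hval: "h y = emeasure lborel (S \<inter> {x. x - y \<in> S})" for y
    proof -
      have "h y = (\<integral>\<^sup>+ x. indicator (S \<inter> {x. x - y \<in> S}) x \<partial>lborel)"
        unfolding h_def by (intro nn_integral_cong) (auto simp: indicator_def)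
      also have "\<dots> = emeasure lborel (S \<inter> {x. x - y \<in> S})"
        by (rule nn_integral_indicator) measurable
      finally show ?thesis .
    qed
    have "(\<integral>\<^sup>+ y. indicator W y * h y \<partial>\<mu>) = 0"
    proof -
      have "(\<integral>\<^sup>+ y. indicator W y * h y \<partial>\<mu>) = (\<integral>\<^sup>+ y. h y \<partial>\<nu>)"
        unfolding \<nu>_def by (rule nn_integral_density[OF iWm hmu, symmetric])
      also have "\<dots> = 0" using int0 by (simp add: h_def f_def)
      finally show ?thesis .
    qed
    hence "AE y in \<mu>. indicator W y * h y = 0"
      using borel_measurable_times_ennreal[OF iWm hmu] by (subst (asm) nn_integral_0_iff_AE) auto
    hence "AE y in \<mu>. y \<notin> W"
    proof (rule AE_mp, intro AE_I2 impI notI)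
      fix y assume "indicator W y * h y = 0" "y \<in> W"
      moreover have "h y > 0" using hpos[of y] \<open>y \<in> W\<close> hval
        by (simp add: W_def dist_commute)
      ultimately show False by simp
    qed
    hence "emeasure \<mu> W = 0"
      using Ws assms(3) spmu by (subst (asm) AE_iff_measurable[of W]) auto
    with Wpos show False by simp
  qed
qed

end
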